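(* For every instance $(V,E,\mu,S^* )$ of Rank Minimization, the minimum over valid partitions $(S_1,\dots,S_c,S^* )$ of the rank $1+|\{i:\mu(S_i)>\mu(S^* )\}|$ equals $1+C_l$, where $C_l$ is the number of connected components of the graph $G\setminus S^*$ that contain a vertex $v$ with $\mu(\{v\})>\mu(S^* )$.
   Context: $V$ is a finite set, $E\subseteq V\times V$ reflexive and symmetric, viewed as a simple undirected graph $G=(V,E)$; $\mu:2^V\to[0,\infty)$ is additive with $\mu(S)=0$ only for $S=\emptyset$; $\mathcal{S}$ is the set of nonempty subsets inducing connected subgraphs of $G$; $S^*\in\mathcal{S}\cup\{\emptyset\}$. $G\setminus S^*$ is the graph on $V\setminus S^*$ with all edges incident to $S^*$ removed. A valid partition is a partition $(S_1,\dots,S_c,S^* )$ of $V$ with all $S_i\in\mathcal{S}$. *)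

theory Defs
  imports Complex_Main "HOL-Library.Disjoint_Sets"
begin

text \<open>Graph G = (V,E) with E a reflexive symmetric relation on V.
  The subgraph induced by a vertex set W has edge set E \<inter> W \<times> W.\<close>

definition induced_edges :: "('a \<times> 'a) set \<Rightarrow> 'a set \<Rightarrow> ('a \<times> 'a) set" where
  "induced_edges E W = E \<inter> (W \<times> W)"

definition connected_set :: "('a \<times> 'a) set \<Rightarrow> 'a set \<Rightarrow> bool" where
  "connected_set E S \<longleftrightarrow> S \<noteq> {} \<and>
     (\<forall>x\<in>S. \<forall>y\<in>S. (x, y) \<in> (induced_edges E S)\<^sup>*)"

text \<open>Connected components of G minus S*: the graph on V - S* with all
  edges incident to S* removed.\<close>
definition components_without :: "'a set \<Rightarrow> ('a \<times> 'a) set \<Rightarrow> 'a set \<Rightarrow> 'a set set" where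
  "components_without V E Sstar =
     (\<lambda>v. {u \<in> V - Sstar. (v, u) \<in> (induced_edges E (V - Sstar))\<^sup>*}) ` (V - Sstar)"

text \<open>A valid partition (S_1,...,S_c,S*) of V, represented by the set of
  blocks {S_1,...,S_c} (a partition of V - S*, each block in \<S>).\<close>
definition valid_partition :: "'a set \<Rightarrow> ('a \<times> 'a) set \<Rightarrow> 'a set \<Rightarrow> 'a set set \<Rightarrow> bool" where
  "valid_partition V E Sstar P \<longleftrightarrow>
     partition_on (V - Sstar) P \<and> (\<forall>S\<in>P. connected_set E S)"

definition rank :: "('a set \<Rightarrow> real) \<Rightarrow> 'a set \<Rightarrow> 'a set set \<Rightarrow> nat" where
  "rank \<mu> Sstar P = 1 + card {S \<in> P. \<mu> S > \<mu> Sstar}"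

end

theory Submission
  imports Defs
begin

lemma comp_sym:
  assumes "sym E"
  shows "sym ((induced_edges E W)\<^sup>*)"
  using assms by (intro sym_rtrancl) (auto simp: induced_edges_def sym_def)

lemma comp_same:
  assumes "sym E" and "(x, y) \<in> (induced_edges E W)\<^sup>*"
  shows "{u \<in> W. (y, u) \<in> (induced_edges E W)\<^sup>*} = {u \<in> W. (x, u) \<in> (induced_edges E W)\<^sup>*}"
proof -
  have "(y, x) \<in> (induced_edges E W)\<^sup>*"
    using comp_sym[OF assms(1), of W] assms(2) by (auto simp: sym_def)
  then show ?thesis using assms(2) by (auto intro: rtrancl_trans)
qed

lemma comp_path:
  assumes "(x, u) \<in> (induced_edges E W)\<^sup>*"
  shows "(x, u) \<in> (induced_edges E {u \<in> W. (x, u) \<in> (induced_edges E W)\<^sup>*})\<^sup>*"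
  using assms
proof (induction rule: rtrancl_induct)
  case base then show ?case by simp
next
  case (step y z)
  then have "(y, z) \<in> induced_edges E {u \<in> W. (x, u) \<in> (induced_edges E W)\<^sup>*}"
    by (auto simp: induced_edges_def intro: rtrancl_into_rtrancl)
  with step show ?case by (meson rtrancl.rtrancl_into_rtrancl)
qed

lemma comp_connected:
  assumes "sym E" and "x \<in> W"
  shows "connected_set E {u \<in> W. (x, u) \<in> (induced_edges E W)\<^sup>*}"
proof -
  let ?C = "{u \<in> W. (x, u) \<in> (induced_edges E W)\<^sup>*}"
  have "(y, z) \<in> (induced_edges E ?C)\<^sup>*" if "y \<in> ?C" "z \<in> ?C" for y z
  proof -
    have eq: "{u \<in> W. (y, u) \<in> (induced_edges E W)\<^sup>*} = ?C"
      using comp_same[OF assms(1)] that by blast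
    have "(y, z) \<in> (induced_edges E W)\<^sup>*" using that eq by blast
    from comp_path[OF this] eq show ?thesis by simp
  qed
  moreover have "x \<in> ?C" using assms by simp
  ultimately show ?thesis unfolding connected_set_def by blast
qed

lemma block_in_comp:
  assumes "connected_set E B" "B \<subseteq> W" "b \<in> B" "v \<in> B"
  shows "(b, v) \<in> (induced_edges E W)\<^sup>*"
proof -
  have "(b, v) \<in> (induced_edges E B)\<^sup>*" using assms unfolding connected_set_def by blast
  moreover have "induced_edges E B \<subseteq> induced_edges E W"
    using assms(2) by (auto simp: induced_edges_def)
  ultimately show ?thesis using rtrancl_mono by blast
qed

lemma mu_mono_single:
  fixes \<mu> :: "'a set \<Rightarrow> real"
  assumes mu_nonneg: "\<And>S. S \<subseteq> V \<Longrightarrow> \<mu> S \<ge> 0"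
    and mu_add: "\<And>A B. A \<subseteq> V \<Longrightarrow> B \<subseteq> V \<Longrightarrow> A \<inter> B = {} \<Longrightarrow> \<mu> (A \<union> B) = \<mu> A + \<mu> B"
    and "B \<subseteq> V" "v \<in> B"
  shows "\<mu> {v} \<le> \<mu> B"
proof -
  have e: "B = {v} \<union> (B - {v})" using assms by blast
  have "\<mu> ({v} \<union> (B - {v})) = \<mu> {v} + \<mu> (B - {v})"
    using mu_add[of "{v}" "B - {v}"] assms by auto
  then have "\<mu> B = \<mu> {v} + \<mu> (B - {v})" using e by simp
  moreover have "\<mu> (B - {v}) \<ge> 0" using mu_nonneg[of "B - {v}"] assms(3) by blast
  ultimately show ?thesis by simp
qed

theorem corollary2p5:
  fixes V :: "'a set" and E :: "('a \<times> 'a) set" and \<mu> :: "'a set \<Rightarrow> real"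
    and Sstar :: "'a set"
  assumes finV: "finite V"
    and E_sub: "E \<subseteq> V \<times> V" and E_refl: "refl_on V E" and E_sym: "sym E"
    and mu_nonneg: "\<And>S. S \<subseteq> V \<Longrightarrow> \<mu> S \<ge> 0"
    and mu_add: "\<And>A B. A \<subseteq> V \<Longrightarrow> B \<subseteq> V \<Longrightarrow> A \<inter> B = {} \<Longrightarrow> \<mu> (A \<union> B) = \<mu> A + \<mu> B"
    and mu_zero: "\<And>S. S \<subseteq> V \<Longrightarrow> \<mu> S = 0 \<longleftrightarrow> S = {}"
    and Sstar_sub: "Sstar \<subseteq> V"
    and Sstar_conn: "Sstar = {} \<or> connected_set E Sstar"
  shows "Min (rank \<mu> Sstar ` {P. valid_partition V E Sstar P}) =
         1 + card {C \<in> components_without V E Sstar. \<exists>v\<in>C. \<mu> {v} > \<mu> Sstar}"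
proof -
  define W where "W = V - Sstar"
  define R where "R = induced_edges E W"
  define comp where "comp x = {u \<in> W. (x, u) \<in> R\<^sup>*}" for x
  define H where "H = {C \<in> components_without V E Sstar. \<exists>v\<in>C. \<mu> {v} > \<mu> Sstar}"
  have compsW: "components_without V E Sstar = comp ` W"
    unfolding components_without_def comp_def W_def R_def by simp
  have finW: "finite W" using finV by (simp add: W_def)
  have comp_sub: "comp x \<subseteq> W" for x by (auto simp: comp_def)
  have comp_self: "x \<in> W \<Longrightarrow> x \<in> comp x" for x by (simp add: comp_def)
  have comp_eq: "y \<in> comp x \<Longrightarrow> comp y = comp x" for x y
    unfolding comp_def R_def using comp_same[OF E_sym] by blast
  have comp_conn: "x \<in> W \<Longrightarrow> connected_set E (comp x)" for x
    unfolding comp_def R_def using comp_connected[OF E_sym] by blast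
  have WV: "W \<subseteq> V" by (auto simp: W_def)
  have finH: "finite H" unfolding H_def compsW using finW by simp
  have lower: "card H \<le> card {S \<in> P. \<mu> S > \<mu> Sstar}" if vp: "valid_partition V E Sstar P" for P
  proof -
    have part: "partition_on W P" and conn: "\<And>S. S \<in> P \<Longrightarrow> connected_set E S"
      using vp by (auto simp: valid_partition_def W_def)
    have UP: "\<Union>P = W" using partition_onD1[OF part] by simp
    have finP: "finite P" using finW UP by (metis finite_UnionD)
    define f where "f B = comp (SOME b. b \<in> B)" for B :: "'a set"
    have "H \<subseteq> f ` {S \<in> P. \<mu> S > \<mu> Sstar}"
    proof
      fix C assume "C \<in> H"
      then obtain x v where x: "x \<in> W" "C = comp x" and v: "v \<in> C" "\<mu> {v} > \<mu> Sstar"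
        unfolding H_def compsW by blast
      have vW: "v \<in> W" using v x comp_sub by blast
      then obtain B where B: "B \<in> P" "v \<in> B" using UP by blast
      have BW: "B \<subseteq> W" using B UP by blast
      have b0: "(SOME b. b \<in> B) \<in> B" using B by (meson someI)
      have "v \<in> comp (SOME b. b \<in> B)"
        using block_in_comp[OF conn[OF B(1)] BW b0 B(2)] vW by (simp add: comp_def R_def)
      then have "f B = C" using comp_eq v x unfolding f_def by metis
      moreover have "\<mu> B > \<mu> Sstar"
        using mu_mono_single[of V \<mu> B v, OF mu_nonneg mu_add] BW WV B v by fastforce
      ultimately show "C \<in> f ` {S \<in> P. \<mu> S > \<mu> Sstar}" using B by blast
    qed
    then have "card H \<le> card (f ` {S \<in> P. \<mu> S > \<mu> Sstar})"
      using finP by (intro card_mono) auto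
    also have "\<dots> \<le> card {S \<in> P. \<mu> S > \<mu> Sstar}" using finP by (intro card_image_le) auto
    finally show ?thesis .
  qed
  define L where "L = W - \<Union>H"
  define P0 where "P0 = H \<union> (\<lambda>v. {v}) ` L"
  have H_comp: "C \<in> H \<Longrightarrow> \<exists>x\<in>W. C = comp x" for C unfolding H_def compsW by blast
  have L_light: "v \<in> L \<Longrightarrow> \<not> \<mu> {v} > \<mu> Sstar" for v
  proof
    assume "v \<in> L" "\<mu> {v} > \<mu> Sstar"
    then have "v \<in> W" "comp v \<in> H" using comp_self unfolding L_def H_def compsW by auto
    then show False using \<open>v \<in> L\<close> comp_self unfolding L_def by blast
  qed
  have vp0: "valid_partition V E Sstar P0"
    unfolding valid_partition_def W_def[symmetric]
  proof (intro conjI ballI partition_onI)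
    show "\<Union>P0 = W" unfolding P0_def L_def using H_comp comp_sub by auto
  next
    fix p q assume pq: "p \<in> P0" "q \<in> P0" "p \<noteq> q"
    show "disjnt p q"
    proof (rule ccontr)
      assume "\<not> disjnt p q"
      then obtain y where y: "y \<in> p" "y \<in> q" by (auto simp: disjnt_def)
      have "p = q"
      proof (cases "p \<in> H")
        case pH: True
        then obtain x where px: "p = comp x" using H_comp by blast
        show ?thesis
        proof (cases "q \<in> H")
          case True
          then obtain x' where "q = comp x'" using H_comp by blast
          then show ?thesis using px y comp_eq by metis
        next
          case False
          then have "q = {y}" "y \<in> L" using pq y unfolding P0_def by auto
          then show ?thesis using y pH unfolding L_def by blast
        qed
      next
        case False
        then have p1: "p = {y}" "y \<in> L" using pq y unfolding P0_def by auto
        show ?thesis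
        proof (cases "q \<in> H")
          case True then show ?thesis using p1 y unfolding L_def by blast
        next
          case False then show ?thesis using pq y p1 unfolding P0_def by auto
        qed
      qed
      with pq show False by simp
    qed
  next
    show "{} \<notin> P0" unfolding P0_def using H_comp comp_self by blast
  next
    fix S assume "S \<in> P0"
    then show "connected_set E S"
    proof (cases "S \<in> H")
      case True then show ?thesis using H_comp comp_conn by blast
    next
      case False
      then obtain v where "S = {v}" using \<open>S \<in> P0\<close> unfolding P0_def by blast
      then show ?thesis by (simp add: connected_set_def)
    qed
  qed
  have heavyP0: "{S \<in> P0. \<mu> S > \<mu> Sstar} = H"
  proof
    show "{S \<in> P0. \<mu> S > \<mu> Sstar} \<subseteq> H" unfolding P0_def using L_light by auto
  next
    show "H \<subseteq> {S \<in> P0. \<mu> S > \<mu> Sstar}"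
    proof
      fix C assume C: "C \<in> H"
      then obtain v where v: "v \<in> C" "\<mu> {v} > \<mu> Sstar" unfolding H_def by blast
      have "C \<subseteq> V" using C H_comp comp_sub WV by blast
      then have "\<mu> C > \<mu> Sstar"
        using mu_mono_single[of V \<mu> C v, OF mu_nonneg mu_add] v by fastforce
      then show "C \<in> {S \<in> P0. \<mu> S > \<mu> Sstar}" using C by (simp add: P0_def)
    qed
  qed
  have finVP: "finite {P. valid_partition V E Sstar P}"
  proof (rule finite_subset)
    show "{P. valid_partition V E Sstar P} \<subseteq> Pow (Pow V)"
      by (auto simp: valid_partition_def dest!: partition_onD1)
    show "finite (Pow (Pow V))" using finV by simp
  qed
  show ?thesis
    unfolding H_def[symmetric]
  proof (rule Min_eqI)
    show "finite (rank \<mu> Sstar ` {P. valid_partition V E Sstar P})" using finVP by simp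
  next
    fix y assume "y \<in> rank \<mu> Sstar ` {P. valid_partition V E Sstar P}"
    then show "1 + card H \<le> y" using lower by (auto simp: rank_def)
  next
    show "1 + card H \<in> rank \<mu> Sstar ` {P. valid_partition V E Sstar P}"
      using vp0 heavyP0 by (auto simp: rank_def intro!: image_eqI[of _ _ P0])
  qed
qed

end
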